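(* Let $S$ be a right non-degenerate semigroup of skew type with generating set $X$, $|X|=n$. Let $2\le i\le n+1$, let $Y\subseteq X$ with $|Y|=i-1$, let $Z\subseteq Y$ and $b\in D_Z$, and let $k$ be the length of $b$ in the generators $X$. Then $(S_{i-1})^k\cap D_Y\subseteq bS$. Furthermore, $(S_{i-1})^{k+1}\cap D_Y\subseteq bS_{i-1}$ and $(S_{i-1}\cap S_{i-1}')^{k+1}\cap D_Y\subseteq b(S_{i-1}\cap S_{i-1}')$.
   Context: A semigroup of skew type is a monoid $S$ with a monoid presentation $S=\langle x_1,\ldots,x_n \mid x_ix_j=x_kx_l\rangle$ consisting of $\binom{n}{2}$ relations, each of the form $x_ix_j=x_kx_l$ with $i\neq j$, $k\neq l$, such that every word $x_px_q$ with $p\neq q$ appears (as one side) in exactly one of the relations; $X=\{x_1,\ldots,x_n\}$. For $a,b\in X$, the partner of $ab$ is the other side of the unique defining relation containing $ab$ if $a\neq b$, and $ab$ itself if $a=b$. $S$ is right non-degenerate if for every $x\in X$ the map $X\to X$ sending $y$ to the first letter of the partner of $xy$ is surjective. For $W\subseteq X$: $S_W=\bigcap_{w\in W}wS$, $S'_W=\bigcap_{w\in W}Sw$, and $D_W=\{s\in S_W\mid \text{if } s=xt \text{ with } x\in X,\ t\in S, \text{ then } x\in W\}$. For $1\le j\le n$: $S_j=\bigcup_{W\subseteq X,|W|=j}S_W$ and $S'_j=\bigcup_{W\subseteq X,|W|=j}S'_W$. For subsets $A\subseteq S$, $A^k$ denotes the set of products of $k$ elements of $A$. *)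

theory Defs
  imports Main
begin

text \<open>A monoid presentation on generators X (elements of type 'a) is given by a set R of
  defining relations; a relation (u,v) in R stands for u = v, where u = (p,q) denotes the
  word x_p x_q. Elements of the monoid S are represented by words (lists over X) modulo the
  congruence generated by R; subsets of S are represented by congruence-closed sets of words.\<close>

definition offdiag :: "'a set \<Rightarrow> ('a \<times> 'a) set" where
  "offdiag X = {(a, b). a \<in> X \<and> b \<in> X \<and> a \<noteq> b}"

definition skew_presentation :: "'a set \<Rightarrow> (('a \<times> 'a) \<times> ('a \<times> 'a)) set \<Rightarrow> bool" where
  "skew_presentation X R \<longleftrightarrow>
     finite X \<and> R \<subseteq> offdiag X \<times> offdiag X \<and> card R = card X choose 2 \<and>
     (\<forall>w \<in> offdiag X. \<exists>!rel. rel \<in> R \<and> (fst rel = w \<or> snd rel = w))"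

definition rstep :: "(('a \<times> 'a) \<times> ('a \<times> 'a)) set \<Rightarrow> 'a list \<Rightarrow> 'a list \<Rightarrow> bool" where
  "rstep R u v \<longleftrightarrow> (\<exists>p q a b c d. ((a, b), (c, d)) \<in> R \<and>
      ((u = p @ [a, b] @ q \<and> v = p @ [c, d] @ q) \<or> (u = p @ [c, d] @ q \<and> v = p @ [a, b] @ q)))"

definition cong :: "(('a \<times> 'a) \<times> ('a \<times> 'a)) set \<Rightarrow> 'a list \<Rightarrow> 'a list \<Rightarrow> bool" where
  "cong R = (rstep R)\<^sup>*\<^sup>*"

definition partner :: "(('a \<times> 'a) \<times> ('a \<times> 'a)) set \<Rightarrow> 'a \<Rightarrow> 'a \<Rightarrow> 'a \<times> 'a" where
  "partner R a b = (if a = b then (a, b)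
      else (THE w. ((a, b), w) \<in> R \<or> (w, (a, b)) \<in> R))"

definition right_nondegenerate :: "'a set \<Rightarrow> (('a \<times> 'a) \<times> ('a \<times> 'a)) set \<Rightarrow> bool" where
  "right_nondegenerate X R \<longleftrightarrow> (\<forall>x \<in> X. (\<lambda>y. fst (partner R x y)) ` X = X)"

definition SW :: "'a set \<Rightarrow> (('a \<times> 'a) \<times> ('a \<times> 'a)) set \<Rightarrow> 'a set \<Rightarrow> 'a list set" where
  "SW X R W = {s \<in> lists X. \<forall>w \<in> W. \<exists>t \<in> lists X. cong R s (w # t)}"

definition SW' :: "'a set \<Rightarrow> (('a \<times> 'a) \<times> ('a \<times> 'a)) set \<Rightarrow> 'a set \<Rightarrow> 'a list set" where
  "SW' X R W = {s \<in> lists X. \<forall>w \<in> W. \<exists>t \<in> lists X. cong R s (t @ [w])}"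

definition DW :: "'a set \<Rightarrow> (('a \<times> 'a) \<times> ('a \<times> 'a)) set \<Rightarrow> 'a set \<Rightarrow> 'a list set" where
  "DW X R W = {s \<in> SW X R W. \<forall>x \<in> X. \<forall>t \<in> lists X. cong R s (x # t) \<longrightarrow> x \<in> W}"

definition Sj :: "'a set \<Rightarrow> (('a \<times> 'a) \<times> ('a \<times> 'a)) set \<Rightarrow> nat \<Rightarrow> 'a list set" where
  "Sj X R j = (\<Union>W \<in> {W. W \<subseteq> X \<and> card W = j}. SW X R W)"

definition Sj' :: "'a set \<Rightarrow> (('a \<times> 'a) \<times> ('a \<times> 'a)) set \<Rightarrow> nat \<Rightarrow> 'a list set" where
  "Sj' X R j = (\<Union>W \<in> {W. W \<subseteq> X \<and> card W = j}. SW' X R W)"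

definition setpow :: "'a set \<Rightarrow> (('a \<times> 'a) \<times> ('a \<times> 'a)) set \<Rightarrow> 'a list set \<Rightarrow> nat \<Rightarrow> 'a list set" where
  "setpow X R A k = {s \<in> lists X. \<exists>ws. length ws = k \<and> set ws \<subseteq> A \<and> cong R s (concat ws)}"

definition lmul :: "'a set \<Rightarrow> (('a \<times> 'a) \<times> ('a \<times> 'a)) set \<Rightarrow> 'a list \<Rightarrow> 'a list set \<Rightarrow> 'a list set" where
  "lmul X R b A = {s \<in> lists X. \<exists>t \<in> A. cong R s (b @ t)}"

end

theory Submission
  imports Defs
begin

definition Lset :: "'a set \<Rightarrow> (('a \<times> 'a) \<times> ('a \<times> 'a)) set \<Rightarrow> 'a list \<Rightarrow> 'a set" where
  "Lset X R s = {x \<in> X. \<exists>t \<in> lists X. cong R s (x # t)}"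

lemma rstep_sym: "rstep R u v \<Longrightarrow> rstep R v u"
  unfolding rstep_def by blast

lemma rstep_ctx:
  assumes "rstep R u v" shows "rstep R (p' @ u @ q') (p' @ v @ q')"
proof -
  from assms obtain p q a b c d where r: "((a, b), (c, d)) \<in> R"
    and h: "(u = p @ [a, b] @ q \<and> v = p @ [c, d] @ q) \<or> (u = p @ [c, d] @ q \<and> v = p @ [a, b] @ q)"
    unfolding rstep_def by blast
  show ?thesis unfolding rstep_def
    apply (rule exI[of _ "p' @ p"], rule exI[of _ "q @ q'"], rule exI[of _ a], rule exI[of _ b],
        rule exI[of _ c], rule exI[of _ d])
    using r h by auto
qed

lemma cong_refl: "cong R u u"
  unfolding cong_def by simp

lemma cong_trans: "cong R u v \<Longrightarrow> cong R v w \<Longrightarrow> cong R u w"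
  unfolding cong_def by (rule rtranclp_trans)

lemma cong_sym: "cong R u v \<Longrightarrow> cong R v u"
  unfolding cong_def
proof (induction rule: rtranclp_induct)
  case base then show ?case by simp
next
  case (step y z)
  then show ?case by (meson converse_rtranclp_into_rtranclp rstep_sym)
qed

lemma cong_ctx: "cong R u v \<Longrightarrow> cong R (p @ u @ q) (p @ v @ q)"
  unfolding cong_def
proof (induction rule: rtranclp_induct)
  case base then show ?case by simp
next
  case (step y z)
  then show ?case by (meson rtranclp.rtrancl_into_rtrancl rstep_ctx)
qed

lemma cong_app: "cong R u v \<Longrightarrow> cong R (u @ q) (v @ q)"
  using cong_ctx[of R u v "[]" q] by simp

lemma cong_pre: "cong R u v \<Longrightarrow> cong R (p @ u) (p @ v)"
  using cong_ctx[of R u v p "[]"] by simp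

lemma partner_prop:
  assumes sk: "skew_presentation X R" and y: "y \<in> X" and w: "w \<in> X"
  shows "fst (partner R y w) \<in> X \<and> snd (partner R y w) \<in> X \<and>
         cong R [y, w] [fst (partner R y w), snd (partner R y w)]"
proof (cases "y = w")
  case True
  then show ?thesis using y by (simp add: partner_def cong_refl)
next
  case False
  let ?P = "\<lambda>v. ((y, w), v) \<in> R \<or> (v, (y, w)) \<in> R"
  have od: "(y, w) \<in> offdiag X" using y w False by (simp add: offdiag_def)
  from sk have sub: "R \<subseteq> offdiag X \<times> offdiag X"
    and uq: "\<forall>ww \<in> offdiag X. \<exists>!rel. rel \<in> R \<and> (fst rel = ww \<or> snd rel = ww)"
    unfolding skew_presentation_def by auto
  from uq od obtain rel where rel: "rel \<in> R" "fst rel = (y, w) \<or> snd rel = (y, w)"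
    and rels: "\<And>r'. r' \<in> R \<and> (fst r' = (y, w) \<or> snd r' = (y, w)) \<Longrightarrow> r' = rel"
    by metis
  have ex: "\<exists>v. ?P v"
    using rel by (metis prod.collapse)
  have un: "\<And>v1 v2. ?P v1 \<Longrightarrow> ?P v2 \<Longrightarrow> v1 = v2"
  proof -
    fix v1 v2 assume a1: "?P v1" and a2: "?P v2"
    from a1 have e1: "(((y, w), v1) = rel) \<or> ((v1, (y, w)) = rel)"
      using rels by (metis fst_conv snd_conv)
    from a2 have e2: "(((y, w), v2) = rel) \<or> ((v2, (y, w)) = rel)"
      using rels by (metis fst_conv snd_conv)
    from e1 e2 show "v1 = v2" by auto
  qed
  have "?P (THE v. ?P v)"
    by (rule theI') (use ex un in blast)
  then have P: "?P (partner R y w)"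
    using False by (simp add: partner_def)
  obtain c d where cd: "partner R y w = (c, d)" by fastforce
  from P cd sub have inX: "c \<in> X" "d \<in> X" by (auto simp: offdiag_def)
  from P cd have "rstep R [y, w] [c, d]"
    unfolding rstep_def
    apply (elim disjE)
     apply (rule exI[of _ "[]"], rule exI[of _ "[]"], rule exI[of _ y], rule exI[of _ w],
        rule exI[of _ c], rule exI[of _ d], simp)
    apply (rule exI[of _ "[]"], rule exI[of _ "[]"], rule exI[of _ c], rule exI[of _ d],
        rule exI[of _ y], rule exI[of _ w], simp)
    done
  then have "cong R [y, w] [c, d]" unfolding cong_def by simp
  then show ?thesis using cd inX by simp
qed

lemma sigma_inj:
  assumes sk: "skew_presentation X R" and rn: "right_nondegenerate X R" and y: "y \<in> X"
  shows "inj_on (\<lambda>z. fst (partner R y z)) X"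
proof -
  have f: "finite X" using sk by (simp add: skew_presentation_def)
  have "(\<lambda>z. fst (partner R y z)) ` X = X" using rn y by (simp add: right_nondegenerate_def)
  then show ?thesis using f by (simp add: eq_card_imp_inj_on)
qed

lemma cong_cons:
  assumes sk: "skew_presentation X R" and x: "x \<in> X" and z: "z \<in> X" and r: "r \<in> lists X"
  shows "\<exists>t \<in> lists X. cong R (x # z # r) (fst (partner R x z) # t)"
proof -
  from partner_prop[OF sk x z] have p: "fst (partner R x z) \<in> X" "snd (partner R x z) \<in> X"
    "cong R [x, z] [fst (partner R x z), snd (partner R x z)]" by auto
  have "cong R ([x, z] @ r) ([fst (partner R x z), snd (partner R x z)] @ r)"
    using cong_app[OF p(3)] .
  then show ?thesis using p r by (intro bexI[of _ "snd (partner R x z) # r"]) auto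
qed

lemma Lset_sub: "Lset X R s \<subseteq> X" unfolding Lset_def by auto

lemma Lset_cong: "cong R s s' \<Longrightarrow> Lset X R s' \<subseteq> Lset X R s"
  unfolding Lset_def using cong_trans by blast

lemma Lset_prefix:
  assumes "cong R s (p @ q)" "q \<in> lists X"
  shows "Lset X R p \<subseteq> Lset X R s"
proof
  fix x assume "x \<in> Lset X R p"
  then obtain t where t: "x \<in> X" "t \<in> lists X" "cong R p (x # t)" unfolding Lset_def by auto
  have "cong R (p @ q) ((x # t) @ q)" using cong_app[OF t(3)] .
  then have "cong R s (x # (t @ q))" using assms(1) cong_trans by fastforce
  moreover have "t @ q \<in> lists X" using t assms(2) by simp
  ultimately show "x \<in> Lset X R s" unfolding Lset_def using t(1) by blast
qed

lemma Lset_SW: "s \<in> SW X R W \<Longrightarrow> W \<subseteq> X \<Longrightarrow> W \<subseteq> Lset X R s"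
  unfolding Lset_def SW_def by auto

lemma Lset_step:
  assumes sk: "skew_presentation X R" and x: "x \<in> X" and c: "cong R s (x # u)"
  shows "(\<lambda>z. fst (partner R x z)) ` Lset X R u \<subseteq> Lset X R s"
proof
  fix y assume "y \<in> (\<lambda>z. fst (partner R x z)) ` Lset X R u"
  then obtain z r where z: "z \<in> X" "r \<in> lists X" "cong R u (z # r)" "y = fst (partner R x z)"
    unfolding Lset_def by auto
  obtain t where t: "t \<in> lists X" "cong R (x # z # r) (y # t)"
    using cong_cons[OF sk x z(1) z(2)] z(4) by auto
  have "cong R (x # u) (x # z # r)" using cong_pre[OF z(3), of "[x]"] by simp
  then have "cong R s (y # t)" using c t(2) cong_trans by blast
  moreover have "y \<in> X" using partner_prop[OF sk x z(1)] z(4) by simp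
  ultimately show "y \<in> Lset X R s" unfolding Lset_def using t(1) by auto
qed

lemma SW_cong: "s \<in> SW X R W \<Longrightarrow> cong R s' s \<Longrightarrow> s' \<in> lists X \<Longrightarrow> s' \<in> SW X R W"
  unfolding SW_def using cong_trans by blast

lemma SW_app: "s \<in> SW X R W \<Longrightarrow> q \<in> lists X \<Longrightarrow> s @ q \<in> SW X R W"
proof -
  assume a: "s \<in> SW X R W" "q \<in> lists X"
  show ?thesis unfolding SW_def
  proof (intro CollectI conjI ballI)
    show "s @ q \<in> lists X" using a unfolding SW_def by auto
    fix w assume "w \<in> W"
    then obtain t where t: "t \<in> lists X" "cong R s (w # t)" using a unfolding SW_def by blast
    have "cong R (s @ q) (w # (t @ q))" using cong_app[OF t(2)] by simp
    moreover have "t @ q \<in> lists X" using t a by simp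
    ultimately show "\<exists>t\<in>lists X. cong R (s @ q) (w # t)" by blast
  qed
qed

lemma SW'_cong: "s \<in> SW' X R W \<Longrightarrow> cong R s' s \<Longrightarrow> s' \<in> lists X \<Longrightarrow> s' \<in> SW' X R W"
  unfolding SW'_def using cong_trans by blast

lemma SW'_pre: "s \<in> SW' X R W \<Longrightarrow> p \<in> lists X \<Longrightarrow> p @ s \<in> SW' X R W"
proof -
  assume a: "s \<in> SW' X R W" "p \<in> lists X"
  show ?thesis unfolding SW'_def
  proof (intro CollectI conjI ballI)
    show "p @ s \<in> lists X" using a unfolding SW'_def by auto
    fix w assume "w \<in> W"
    then obtain t where t: "t \<in> lists X" "cong R s (t @ [w])" using a unfolding SW'_def by blast
    have "cong R (p @ s) ((p @ t) @ [w])" using cong_pre[OF t(2)] by simp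
    moreover have "p @ t \<in> lists X" using t a by simp
    ultimately show "\<exists>t\<in>lists X. cong R (p @ s) (t @ [w])" by blast
  qed
qed

lemma Sj_lists: "s \<in> Sj X R m \<Longrightarrow> s \<in> lists X"
  unfolding Sj_def SW_def by auto

lemma Sj'_lists: "s \<in> Sj' X R m \<Longrightarrow> s \<in> lists X"
  unfolding Sj'_def SW'_def by auto

lemma lemmaA:
  assumes sk: "skew_presentation X R" and rn: "right_nondegenerate X R"
  shows "t \<in> lists X \<Longrightarrow> v \<in> SW X R W \<Longrightarrow> W \<subseteq> X \<Longrightarrow>
    \<exists>W'. W' \<subseteq> X \<and> card W' = card W \<and> t @ v \<in> SW X R W'"
proof (induction t)
  case Nil then show ?case by auto
next
  case (Cons y t)
  then obtain W'' where W'': "W'' \<subseteq> X" "card W'' = card W" "t @ v \<in> SW X R W''" by auto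
  have y: "y \<in> X" using Cons by simp
  let ?f = "\<lambda>z. fst (partner R y z)"
  have inj: "inj_on ?f W''" using sigma_inj[OF sk rn y] W''(1) inj_on_subset by blast
  have sub: "?f ` W'' \<subseteq> X" using W''(1) partner_prop[OF sk y] by auto
  have "y # t @ v \<in> SW X R (?f ` W'')"
    unfolding SW_def
  proof (intro CollectI conjI ballI)
    show "y # t @ v \<in> lists X" using W''(3) y unfolding SW_def by auto
    fix u assume "u \<in> ?f ` W''"
    then obtain w where w: "w \<in> W''" "u = ?f w" by auto
    obtain r where r: "r \<in> lists X" "cong R (t @ v) (w # r)" using W''(3) w(1) unfolding SW_def by blast
    obtain t' where t': "t' \<in> lists X" "cong R (y # w # r) (u # t')"
      using cong_cons[OF sk y _ r(1), of w] w W''(1) by auto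
    have "cong R (y # t @ v) (y # w # r)" using cong_pre[OF r(2), of "[y]"] by simp
    then show "\<exists>t2\<in>lists X. cong R (y # t @ v) (u # t2)" using t' cong_trans by blast
  qed
  then show ?case using sub card_image[OF inj] W''(2) by (intro exI[of _ "?f ` W''"]) auto
qed

lemma concat_lists: "set ss \<subseteq> Sj X R m \<Longrightarrow> concat ss \<in> lists X"
proof (induction ss)
  case Nil then show ?case by simp
next
  case (Cons a ss)
  then have "a \<in> lists X" using Sj_lists[of a X R m] by simp
  then show ?case using Cons by simp
qed

lemma SjE: "s \<in> Sj X R m \<Longrightarrow> (\<And>W. W \<subseteq> X \<Longrightarrow> card W = m \<Longrightarrow> s \<in> SW X R W \<Longrightarrow> P) \<Longrightarrow> P"
  unfolding Sj_def by auto

lemma SjI: "W \<subseteq> X \<Longrightarrow> card W = m \<Longrightarrow> s \<in> SW X R W \<Longrightarrow> s \<in> Sj X R m"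
  unfolding Sj_def by auto

lemma Sj'E: "s \<in> Sj' X R m \<Longrightarrow> (\<And>W. W \<subseteq> X \<Longrightarrow> card W = m \<Longrightarrow> s \<in> SW' X R W \<Longrightarrow> P) \<Longrightarrow> P"
  unfolding Sj'_def by auto

lemma Sj'I: "W \<subseteq> X \<Longrightarrow> card W = m \<Longrightarrow> s \<in> SW' X R W \<Longrightarrow> s \<in> Sj' X R m"
  unfolding Sj'_def by auto

lemma main:
  assumes sk: "skew_presentation X R" and rn: "right_nondegenerate X R"
  shows "\<And>ss s Y. length b \<le> length ss \<Longrightarrow> set ss \<subseteq> Sj X R m \<Longrightarrow> s \<in> lists X \<Longrightarrow>
    cong R s (concat ss) \<Longrightarrow> b \<in> lists X \<Longrightarrow> Lset X R s \<subseteq> Y \<Longrightarrow> finite Y \<Longrightarrow>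
    card Y \<le> m \<Longrightarrow> Lset X R b \<subseteq> Y \<Longrightarrow>
    \<exists>t\<in>lists X. cong R s (b @ t) \<and> (length b < length ss \<longrightarrow> t \<in> Sj X R m \<and>
        (last ss \<in> Sj' X R m \<longrightarrow> t \<in> Sj' X R m))"
proof (induction b)
  case Nil
  show ?case
  proof (intro bexI conjI impI)
    show "cong R s ([] @ s)" by (simp add: cong_refl)
    show "s \<in> lists X" by fact
    assume len: "length [] < length ss"
    then obtain s1 rest where ss: "ss = s1 # rest" by (cases ss) auto
    have s1: "s1 \<in> Sj X R m" using Nil ss by auto
    have rl: "concat rest \<in> lists X" using Nil.prems(2) ss concat_lists[of rest X R m] by auto
    from s1 obtain W where W: "W \<subseteq> X" "card W = m" "s1 \<in> SW X R W" by (rule SjE)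
    have "s1 @ concat rest \<in> SW X R W" using SW_app[OF W(3) rl] .
    then have "s \<in> SW X R W" using SW_cong Nil.prems(3,4) ss by fastforce
    then show "s \<in> Sj X R m" using W by (rule_tac SjI) auto
    assume la: "last ss \<in> Sj' X R m"
    from la obtain W' where W': "W' \<subseteq> X" "card W' = m" "last ss \<in> SW' X R W'" by (rule Sj'E)
    have bl: "concat (butlast ss) \<in> lists X"
      using Nil.prems(2) concat_lists[of "butlast ss" X R m] by (meson in_set_butlastD subset_iff)
    have eq: "concat ss = concat (butlast ss) @ last ss"
      using ss by (metis append_butlast_last_id concat_append concat.simps list.distinct(1) self_append_conv)
    have "concat (butlast ss) @ last ss \<in> SW' X R W'" using SW'_pre[OF W'(3) bl] .
    then have "s \<in> SW' X R W'" using SW'_cong Nil.prems(3,4) eq by fastforce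
    then show "s \<in> Sj' X R m" using W' by (rule_tac Sj'I) auto
  qed
next
  case (Cons x b')
  let ?f = "\<lambda>z. fst (partner R x z)"
  have fX: "finite X" using sk by (simp add: skew_presentation_def)
  obtain s1 rest where ss: "ss = s1 # rest" using Cons.prems(1) by (cases ss) auto
  have x: "x \<in> X" and b': "b' \<in> lists X" using Cons.prems(5) by auto
  have s1: "s1 \<in> Sj X R m" using Cons.prems(2) ss by auto
  from s1 obtain W1 where W1: "W1 \<subseteq> X" "card W1 = m" "s1 \<in> SW X R W1" by (rule SjE)
  have rl: "concat rest \<in> lists X" using Cons.prems(2) ss concat_lists[of rest X R m] by auto
  have "Lset X R s1 \<subseteq> Lset X R s"
    using Lset_prefix[of R s s1 "concat rest" X] Cons.prems(4) ss rl by simp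
  then have W1Y: "W1 \<subseteq> Y" using Lset_SW[OF W1(3) W1(1)] Cons.prems(6) by auto
  have "card W1 \<le> card Y" using card_mono[OF Cons.prems(7) W1Y] .
  then have "W1 = Y" using card_subset_eq[OF Cons.prems(7) W1Y] W1(2) Cons.prems(8) by auto
  moreover have "x \<in> Lset X R (x # b')" unfolding Lset_def using x b' cong_refl by blast
  ultimately have "x \<in> W1" using Cons.prems(9) by auto
  then obtain t1 where t1: "t1 \<in> lists X" "cong R s1 (x # t1)" using W1(3) unfolding SW_def by blast
  show ?case
  proof (cases rest)
    case Nil
    then have "b' = []" using Cons.prems(1) ss by simp
    moreover have "cong R s (x # t1)" using Cons.prems(4) ss Nil t1(2) cong_trans by auto
    ultimately show ?thesis using t1(1) ss Nil by auto
  next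
    case (Cons s2 rest')
    have s2: "s2 \<in> Sj X R m" using Cons.prems(2) ss Cons by auto
    from s2 obtain W2 where W2: "W2 \<subseteq> X" "card W2 = m" "s2 \<in> SW X R W2" by (rule SjE)
    obtain W' where W': "W' \<subseteq> X" "card W' = m" "t1 @ s2 \<in> SW X R W'"
      using lemmaA[OF sk rn t1(1) W2(3) W2(1)] W2(2) by auto
    define ss' where "ss' = (t1 @ s2) # rest'"
    define u where "u = concat ss'"
    have ss'S: "set ss' \<subseteq> Sj X R m"
      using W' Cons.prems(2) ss Cons unfolding ss'_def by (auto intro: SjI)
    have ul: "u \<in> lists X" using concat_lists[OF ss'S] u_def by simp
    have r'l: "concat rest' \<in> lists X" using rl Cons by simp
    have "cong R (s1 @ (s2 @ concat rest')) ((x # t1) @ (s2 @ concat rest'))"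
      using cong_app[OF t1(2)] .
    then have su: "cong R s (x # u)"
      using Cons.prems(4) ss Cons u_def ss'_def cong_trans by fastforce
    have LuX: "Lset X R u \<subseteq> X" by (rule Lset_sub)
    have finLu: "finite (Lset X R u)" using LuX fX finite_subset by blast
    have injX: "inj_on ?f X" using sigma_inj[OF sk rn x] .
    have injLu: "inj_on ?f (Lset X R u)" using inj_on_subset[OF injX LuX] .
    have fLuY: "?f ` Lset X R u \<subseteq> Y" using Lset_step[OF sk x su] Cons.prems(6) by auto
    have "Lset X R (t1 @ s2) \<subseteq> Lset X R u"
      using Lset_prefix[of R u "t1 @ s2" "concat rest'" X] r'l unfolding u_def ss'_def
      by (simp add: cong_refl)
    then have W'Lu: "W' \<subseteq> Lset X R u" using Lset_SW[OF W'(3) W'(1)] by auto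
    have c1: "card W' \<le> card (Lset X R u)" using card_mono[OF finLu W'Lu] .
    have c2: "card (?f ` Lset X R u) = card (Lset X R u)" using card_image[OF injLu] .
    have c3: "card (?f ` Lset X R u) \<le> card Y" using card_mono[OF Cons.prems(7) fLuY] .
    have fLu: "?f ` Lset X R u = Y"
      using card_subset_eq[OF Cons.prems(7) fLuY] c1 c2 c3 W'(2) Cons.prems(8) by auto
    have cardLu: "card (Lset X R u) \<le> m" using c2 c3 Cons.prems(8) by auto
    have Lb': "Lset X R b' \<subseteq> Lset X R u"
    proof
      fix z assume z: "z \<in> Lset X R b'"
      have "?f z \<in> Lset X R (x # b')"
        using Lset_step[OF sk x cong_refl[of R "x # b'"]] z by auto
      then have "?f z \<in> ?f ` Lset X R u" using Cons.prems(9) fLu by auto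
      then obtain z' where z': "z' \<in> Lset X R u" "?f z = ?f z'" by auto
      have "z \<in> X" using z Lset_sub[of X R b'] by auto
      then have "z = z'" using injX z' LuX by (meson inj_onD subsetD)
      then show "z \<in> Lset X R u" using z' by simp
    qed
    have lenss': "length ss' = length rest" using Cons unfolding ss'_def by simp
    obtain t where t: "t \<in> lists X" "cong R u (b' @ t)"
      "length b' < length ss' \<longrightarrow> t \<in> Sj X R m \<and> (last ss' \<in> Sj' X R m \<longrightarrow> t \<in> Sj' X R m)"
      using Cons.IH[of ss' u "Lset X R u"] Cons.prems(1) ss lenss' ss'S ul cong_refl b'
        finLu cardLu Lb' unfolding u_def by auto
    have "cong R (x # u) ((x # b') @ t)" using cong_pre[OF t(2), of "[x]"] by simp
    then have st: "cong R s ((x # b') @ t)" using su cong_trans by blast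
    have last: "last ss \<in> Sj' X R m \<Longrightarrow> last ss' \<in> Sj' X R m"
    proof (cases rest')
      case Nil
      assume "last ss \<in> Sj' X R m"
      then have "s2 \<in> Sj' X R m" using ss Cons Nil by simp
      then obtain W where W: "W \<subseteq> X" "card W = m" "s2 \<in> SW' X R W" by (rule Sj'E)
      then have "t1 @ s2 \<in> SW' X R W" using SW'_pre t1(1) by blast
      then show ?thesis using W Nil ss'_def by (auto intro: Sj'I)
    next
      case (Cons a l)
      assume "last ss \<in> Sj' X R m"
      then show ?thesis using ss \<open>rest = s2 # rest'\<close> Cons ss'_def by simp
    qed
    show ?thesis using t st last lenss' ss by auto
  qed
qed

lemma DW_Lset: "s \<in> DW X R W \<Longrightarrow> Lset X R s \<subseteq> W"
  unfolding DW_def Lset_def by blast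

lemma DW_lists: "s \<in> DW X R W \<Longrightarrow> s \<in> lists X"
  unfolding DW_def SW_def by blast

theorem lemma4p3:
  fixes X :: "'a set" and R :: "(('a \<times> 'a) \<times> ('a \<times> 'a)) set"
    and n i k :: nat and Y Z :: "'a set" and b :: "'a list"
  assumes "skew_presentation X R" and "right_nondegenerate X R" and "card X = n"
    and "2 \<le> i" and "i \<le> n + 1"
    and "Y \<subseteq> X" and "card Y = i - 1" and "Z \<subseteq> Y"
    and "b \<in> DW X R Z" and "k = length b"
  shows "setpow X R (Sj X R (i - 1)) k \<inter> DW X R Y \<subseteq> lmul X R b (lists X) \<and>
    setpow X R (Sj X R (i - 1)) (k + 1) \<inter> DW X R Y \<subseteq> lmul X R b (Sj X R (i - 1)) \<and>
    setpow X R (Sj X R (i - 1) \<inter> Sj' X R (i - 1)) (k + 1) \<inter> DW X R Y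
           \<subseteq> lmul X R b (Sj X R (i - 1) \<inter> Sj' X R (i - 1))"
proof -
  have finY: "finite Y" using assms(1,6) finite_subset unfolding skew_presentation_def by blast
  have bl: "b \<in> lists X" using DW_lists[OF assms(9)] .
  have Lb: "Lset X R b \<subseteq> Y" using DW_Lset[OF assms(9)] assms(8) by auto
  have cY: "card Y \<le> i - 1" using assms(7) by simp
  note M = main[OF assms(1,2), of b _ "i - 1" _ Y]
  have P1: "setpow X R (Sj X R (i - 1)) k \<inter> DW X R Y \<subseteq> lmul X R b (lists X)"
  proof
    fix s assume s: "s \<in> setpow X R (Sj X R (i - 1)) k \<inter> DW X R Y"
    then obtain ws where ws: "length ws = k" "set ws \<subseteq> Sj X R (i - 1)" "cong R s (concat ws)" "s \<in> lists X"
      unfolding setpow_def by blast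
    have "Lset X R s \<subseteq> Y" using s DW_Lset by blast
    then obtain t where "t \<in> lists X" "cong R s (b @ t)"
      using M[of ws s] ws bl finY cY Lb assms(10) by auto
    then show "s \<in> lmul X R b (lists X)" unfolding lmul_def using ws(4) by blast
  qed
  have P2: "setpow X R (Sj X R (i - 1)) (k + 1) \<inter> DW X R Y \<subseteq> lmul X R b (Sj X R (i - 1))"
  proof
    fix s assume s: "s \<in> setpow X R (Sj X R (i - 1)) (k + 1) \<inter> DW X R Y"
    then obtain ws where ws: "length ws = k + 1" "set ws \<subseteq> Sj X R (i - 1)" "cong R s (concat ws)" "s \<in> lists X"
      unfolding setpow_def by blast
    have "Lset X R s \<subseteq> Y" using s DW_Lset by blast
    then obtain t where "t \<in> Sj X R (i - 1)" "cong R s (b @ t)"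
      using M[of ws s] ws bl finY cY Lb assms(10) by auto
    then show "s \<in> lmul X R b (Sj X R (i - 1))" unfolding lmul_def using ws(4) by blast
  qed
  have P3: "setpow X R (Sj X R (i - 1) \<inter> Sj' X R (i - 1)) (k + 1) \<inter> DW X R Y
           \<subseteq> lmul X R b (Sj X R (i - 1) \<inter> Sj' X R (i - 1))"
  proof
    fix s assume s: "s \<in> setpow X R (Sj X R (i - 1) \<inter> Sj' X R (i - 1)) (k + 1) \<inter> DW X R Y"
    then obtain ws where ws: "length ws = k + 1" "set ws \<subseteq> Sj X R (i - 1) \<inter> Sj' X R (i - 1)"
        "cong R s (concat ws)" "s \<in> lists X"
      unfolding setpow_def by blast
    have ne: "ws \<noteq> []" using ws(1) by auto
    have la: "last ws \<in> Sj' X R (i - 1)" using ws(2) last_in_set[OF ne] by blast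
    have "Lset X R s \<subseteq> Y" using s DW_Lset by blast
    then obtain t where "t \<in> Sj X R (i - 1)" "t \<in> Sj' X R (i - 1)" "cong R s (b @ t)"
      using M[of ws s] ws bl finY cY Lb assms(10) la by auto
    then show "s \<in> lmul X R b (Sj X R (i - 1) \<inter> Sj' X R (i - 1))" unfolding lmul_def using ws(4) by blast
  qed
  show ?thesis using P1 P2 P3 by blast
qed

end
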